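(* For every integer $k\geq 0$ and $n=3^{k}\cdot 7$, there exists a regular $n$-tournament that is not $(n-1)$-spectrally monomorphic.
   Context: An $n$-tournament is a digraph on $n$ vertices in which every pair of distinct vertices is joined by exactly one arc. Its adjacency matrix $A=(a_{ij})$ (w.r.t. an ordering $v_1,\dots,v_n$) has $a_{ij}=1$ if $v_i$ dominates $v_j$ and $0$ otherwise. A tournament is regular if all its vertices have the same out-degree (necessarily $(n-1)/2$). A tournament is $k$-spectrally monomorphic if all the $k\times k$ principal submatrices of its adjacency matrix have the same characteristic polynomial $\det(zI-M)$. *)

theory Defs
  imports "Jordan_Normal_Form.Char_Poly" "Jordan_Normal_Form.DL_Submatrix"
begin

text \<open>An n-tournament on the vertex set {0..<n}: T i j means vertex i dominates vertex j.\<close>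
definition tournament :: "nat \<Rightarrow> (nat \<Rightarrow> nat \<Rightarrow> bool) \<Rightarrow> bool" where
  "tournament n T \<longleftrightarrow>
     (\<forall>i<n. \<not> T i i) \<and>
     (\<forall>i<n. \<forall>j<n. i \<noteq> j \<longrightarrow> (T i j \<longleftrightarrow> \<not> T j i))"

definition out_degree :: "nat \<Rightarrow> (nat \<Rightarrow> nat \<Rightarrow> bool) \<Rightarrow> nat \<Rightarrow> nat" where
  "out_degree n T i = card {j. j < n \<and> T i j}"

definition regular_tournament :: "nat \<Rightarrow> (nat \<Rightarrow> nat \<Rightarrow> bool) \<Rightarrow> bool" where
  "regular_tournament n T \<longleftrightarrow> tournament n T \<and>
     (\<exists>d. \<forall>i<n. out_degree n T i = d)"

definition adj_matrix :: "nat \<Rightarrow> (nat \<Rightarrow> nat \<Rightarrow> bool) \<Rightarrow> real mat" where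
  "adj_matrix n T = mat n n (\<lambda>(i,j). if T i j then 1 else 0)"

definition spectrally_monomorphic :: "nat \<Rightarrow> nat \<Rightarrow> (nat \<Rightarrow> nat \<Rightarrow> bool) \<Rightarrow> bool" where
  "spectrally_monomorphic k n T \<longleftrightarrow>
     (\<forall>S S'. S \<subseteq> {0..<n} \<longrightarrow> card S = k \<longrightarrow> S' \<subseteq> {0..<n} \<longrightarrow> card S' = k \<longrightarrow>
        char_poly (submatrix (adj_matrix n T) S S) = char_poly (submatrix (adj_matrix n T) S' S'))"

end

theory Submission
  imports Defs "Jordan_Normal_Form.Schur_Decomposition"
begin


definition tr :: "'a::comm_ring_1 mat \<Rightarrow> 'a" where
  "tr A = (\<Sum>i<dim_row A. A $$ (i,i))"

lemma tr_comm:
  assumes "A \<in> carrier_mat n m" "B \<in> carrier_mat m n"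
  shows "tr (A * B) = tr (B * A)"
proof -
  have "tr (A * B) = (\<Sum>i<n. \<Sum>j<m. A $$ (i,j) * B $$ (j,i))"
    using assms by (simp add: tr_def scalar_prod_def row_def col_def atLeast0LessThan)
  also have "\<dots> = (\<Sum>j<m. \<Sum>i<n. B $$ (j,i) * A $$ (i,j))"
    by (subst sum.swap) (simp add: mult.commute)
  also have "\<dots> = tr (B * A)"
    using assms by (simp add: tr_def scalar_prod_def row_def col_def atLeast0LessThan)
  finally show ?thesis .
qed

lemma upper_pow:
  assumes U: "U \<in> carrier_mat n n" and ut: "upper_triangular U"
  shows "upper_triangular (U ^\<^sub>m k) \<and> (\<forall>i<n. (U ^\<^sub>m k) $$ (i,i) = U $$ (i,i) ^ k)"
proof (induction k)
  case 0
  then show ?case using U by auto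
next
  case (Suc k)
  have C: "U ^\<^sub>m k \<in> carrier_mat n n" using U by auto
  have ut1: "\<And>i j. i < n \<Longrightarrow> j < i \<Longrightarrow> (U ^\<^sub>m k) $$ (i,j) = 0"
    using Suc C by (auto dest: upper_triangularD)
  have ut2: "\<And>i j. i < n \<Longrightarrow> j < i \<Longrightarrow> U $$ (i,j) = 0"
    using ut U by (auto dest: upper_triangularD)
  have e: "(U ^\<^sub>m Suc k) $$ (i,j) = (\<Sum>l<n. (U ^\<^sub>m k) $$ (i,l) * U $$ (l,j))" if "i<n" "j<n" for i j
    using that U C by (simp add: scalar_prod_def row_def col_def atLeast0LessThan)
  have "upper_triangular (U ^\<^sub>m Suc k)"
  proof (rule upper_triangularI)
    fix i j assume ij: "j < i" "i < dim_row (U ^\<^sub>m Suc k)"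
    hence i: "i < n" using U by simp
    have "(\<Sum>l<n. (U ^\<^sub>m k) $$ (i,l) * U $$ (l,j)) = 0"
    proof (rule sum.neutral, intro ballI)
      fix l assume "l \<in> {..<n}"
      then show "(U ^\<^sub>m k) $$ (i,l) * U $$ (l,j) = 0"
        using ut1[of i l] ut2[of l j] ij i by (cases "l < i") auto
    qed
    then show "(U ^\<^sub>m Suc k) $$ (i,j) = 0" using e[of i j] ij i by simp
  qed
  moreover have "(U ^\<^sub>m Suc k) $$ (i,i) = U $$ (i,i) ^ Suc k" if i: "i<n" for i
  proof -
    have "(\<Sum>l<n. (U ^\<^sub>m k) $$ (i,l) * U $$ (l,i)) = (U ^\<^sub>m k) $$ (i,i) * U $$ (i,i)"
    proof -
      have "(\<Sum>l<n. (U ^\<^sub>m k) $$ (i,l) * U $$ (l,i)) = (U ^\<^sub>m k) $$ (i,i) * U $$ (i,i)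
         + (\<Sum>l\<in>{..<n}-{i}. (U ^\<^sub>m k) $$ (i,l) * U $$ (l,i))"
        using i by (subst sum.remove[of _ i]) auto
      moreover have "(\<Sum>l\<in>{..<n}-{i}. (U ^\<^sub>m k) $$ (i,l) * U $$ (l,i)) = 0"
      proof (rule sum.neutral, intro ballI)
        fix l assume "l \<in> {..<n}-{i}"
        then show "(U ^\<^sub>m k) $$ (i,l) * U $$ (l,i) = 0"
          using ut1[of i l] ut2[of l i] i by (cases "l < i") auto
      qed
      ultimately show ?thesis by simp
    qed
    then have "(U ^\<^sub>m Suc k) $$ (i,i) = U $$ (i,i) ^ k * U $$ (i,i)" using e[of i i] i Suc by simp
    then show ?thesis by (simp only: power_Suc2)
  qed
  ultimately show ?case by auto
qed

lemma tr_schur: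
  fixes A :: "complex mat"
  assumes A: "A \<in> carrier_mat n n" and c: "char_poly A = (\<Prod> e \<leftarrow> es. [:- e, 1:])"
  shows "tr (A ^\<^sub>m 4) = (\<Sum>e \<leftarrow> es. e ^ 4)"
proof -
  obtain B P Q where s: "schur_decomposition A es = (B,P,Q)" by (rule prod_cases3)
  from schur_decomposition[OF A c s] have sw: "similar_mat_wit A B P Q" and ut: "upper_triangular B"
    and d: "diag_mat B = es" by blast+
  note car = similar_mat_witD2(5-7)[OF A sw]
  note QP = similar_mat_witD2(2)[OF A sw]
  have eq: "A ^\<^sub>m 4 = P * B ^\<^sub>m 4 * Q" by (rule similar_mat_wit_pow_id[OF sw])
  have B4: "B ^\<^sub>m 4 \<in> carrier_mat n n" using car(1) by (rule pow_carrier_mat)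
  have "tr (A ^\<^sub>m 4) = tr (P * (B ^\<^sub>m 4 * Q))"
    unfolding eq by (simp only: assoc_mult_mat[OF car(2) B4 car(3)])
  also have "\<dots> = tr ((B ^\<^sub>m 4 * Q) * P)"
    by (rule tr_comm[OF car(2)]) (rule mult_carrier_mat[OF B4 car(3)])
  also have "(B ^\<^sub>m 4 * Q) * P = B ^\<^sub>m 4"
    by (simp only: assoc_mult_mat[OF B4 car(3) car(2)] QP right_mult_one_mat[OF B4])
  also have "tr (B ^\<^sub>m 4) = (\<Sum>i<n. B $$ (i,i) ^ 4)"
    using upper_pow[OF car(1) ut, of 4] car(1) by (simp add: tr_def)
  also have "\<dots> = (\<Sum>e \<leftarrow> es. e ^ 4)"
    using car(1) by (simp add: d[symmetric] diag_mat_def interv_sum_list_conv_sum_set_nat atLeast0LessThan o_def)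
  finally show ?thesis .
qed

lemma mm_entry:
  assumes "A \<in> carrier_mat n n" "B \<in> carrier_mat n n" "i < n" "j < n"
  shows "(A * B) $$ (i,j) = (\<Sum>l<n. A $$ (i,l) * B $$ (l,j))"
  using assms by (simp add: scalar_prod_def row_def col_def atLeast0LessThan)

definition tr4 :: "'a::comm_ring_1 mat \<Rightarrow> 'a" where
  "tr4 M = (\<Sum>i<dim_row M. \<Sum>l<dim_row M. \<Sum>k<dim_row M. \<Sum>j<dim_row M.
      M $$ (i,j) * M $$ (j,k) * M $$ (k,l) * M $$ (l,i))"

lemma tr4_pow:
  assumes M: "M \<in> carrier_mat n n"
  shows "tr (M ^\<^sub>m 4) = tr4 M"
proof -
  have M4: "M ^\<^sub>m 4 = ((M * M) * M) * M"
    using M by (simp add: numeral_eq_Suc)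
  have C2: "M * M \<in> carrier_mat n n" "(M * M) * M \<in> carrier_mat n n" using M by auto
  have "tr (M ^\<^sub>m 4) = (\<Sum>i<n. (((M * M) * M) * M) $$ (i,i))"
    using M unfolding M4 tr_def by simp
  also have "\<dots> = (\<Sum>i<n. \<Sum>l<n. (\<Sum>k<n. (\<Sum>j<n. M $$ (i,j) * M $$ (j,k)) * M $$ (k,l)) * M $$ (l,i))"
    using M C2 by (simp add: mm_entry[OF C2(2) M] mm_entry[OF C2(1) M] mm_entry[OF M M] del: assoc_mult_mat index_mult_mat)
  also have "\<dots> = tr4 M"
    using M unfolding tr4_def by (simp add: sum_distrib_right mult.assoc)
  finally show ?thesis .
qed

lemma tr4_char_poly:
  fixes A B :: "real mat"
  assumes A: "A \<in> carrier_mat n n" and B: "B \<in> carrier_mat n n"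
    and c: "char_poly A = char_poly B"
  shows "tr4 A = tr4 B"
proof -
  let ?cA = "map_mat complex_of_real A" and ?cB = "map_mat complex_of_real B"
  have cA: "?cA \<in> carrier_mat n n" and cB: "?cB \<in> carrier_mat n n" using A B by auto
  have h1: "char_poly ?cA = map_poly complex_of_real (char_poly A)" by (rule of_real_hom.char_poly_hom[OF A])
  have h2: "char_poly ?cB = map_poly complex_of_real (char_poly B)" by (rule of_real_hom.char_poly_hom[OF B])
  have cc: "char_poly ?cA = char_poly ?cB" by (simp only: h1 h2 c)
  obtain es where es: "char_poly ?cA = (\<Prod> a \<leftarrow> es. [:- a, 1:])"
    using char_poly_factorized[OF cA] by blast
  have "tr4 ?cA = tr4 ?cB"
    using tr_schur[OF cA es] tr_schur[OF cB es[unfolded cc]] tr4_pow[OF cA] tr4_pow[OF cB] by simp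
  moreover have "tr4 ?cA = complex_of_real (tr4 A)" "tr4 ?cB = complex_of_real (tr4 B)"
    using A B by (simp_all add: tr4_def)
  ultimately show ?thesis by simp
qed



definition cw :: "('a \<Rightarrow> 'a \<Rightarrow> bool) \<Rightarrow> 'a \<Rightarrow> 'a \<Rightarrow> 'a \<Rightarrow> 'a \<Rightarrow> real" where
  "cw T x y z w = (if T x y \<and> T y z \<and> T z w \<and> T w x then 1 else 0)"

definition WW :: "('a \<Rightarrow> 'a \<Rightarrow> bool) \<Rightarrow> 'a set \<Rightarrow> real" where
  "WW T S = (\<Sum>x\<in>S. \<Sum>w\<in>S. \<Sum>z\<in>S. \<Sum>y\<in>S. cw T x y z w)"

definition FF :: "('a \<Rightarrow> 'a \<Rightarrow> bool) \<Rightarrow> 'a set \<Rightarrow> 'a \<Rightarrow> real" where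
  "FF T S v = (\<Sum>w\<in>S. \<Sum>z\<in>S. \<Sum>y\<in>S. cw T v y z w)"

lemma P1: "(\<Sum>a\<in>A. \<Sum>c\<in>A. \<Sum>b\<in>A. G a b c) = (\<Sum>c\<in>A. \<Sum>b\<in>A. \<Sum>a\<in>A. (G a b c :: real))"
proof -
  have "(\<Sum>a\<in>A. \<Sum>c\<in>A. \<Sum>b\<in>A. G a b c) = (\<Sum>c\<in>A. \<Sum>a\<in>A. \<Sum>b\<in>A. G a b c)"
    by (rule sum.swap)
  also have "\<dots> = (\<Sum>c\<in>A. \<Sum>b\<in>A. \<Sum>a\<in>A. G a b c)"
    by (rule sum.cong[OF refl], rule sum.swap)
  finally show ?thesis .
qed

lemma P2: "(\<Sum>b\<in>A. \<Sum>a\<in>A. \<Sum>c\<in>A. G a b c) = (\<Sum>c\<in>A. \<Sum>b\<in>A. \<Sum>a\<in>A. (G a b c :: real))"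
proof -
  have "(\<Sum>b\<in>A. \<Sum>a\<in>A. \<Sum>c\<in>A. G a b c) = (\<Sum>b\<in>A. \<Sum>c\<in>A. \<Sum>a\<in>A. G a b c)"
    by (rule sum.cong[OF refl], rule sum.swap)
  also have "\<dots> = (\<Sum>c\<in>A. \<Sum>b\<in>A. \<Sum>a\<in>A. G a b c)"
    by (rule sum.swap)
  finally show ?thesis .
qed

lemma r2: "(\<Sum>x\<in>V. \<Sum>z\<in>V. \<Sum>y\<in>V. cw T x y z v) = FF T V v"
proof -
  have "(\<Sum>x\<in>V. \<Sum>z\<in>V. \<Sum>y\<in>V. cw T x y z v) = (\<Sum>x\<in>V. \<Sum>z\<in>V. \<Sum>y\<in>V. cw T v x y z)"
    by (intro sum.cong refl) (auto simp: cw_def)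
  also have "\<dots> = FF T V v" unfolding FF_def by (rule P1)
  finally show ?thesis .
qed

lemma r3: "(\<Sum>x\<in>V. \<Sum>w\<in>V. \<Sum>y\<in>V. cw T x y v w) = FF T V v"
proof -
  have "(\<Sum>x\<in>V. \<Sum>w\<in>V. \<Sum>y\<in>V. cw T x y v w) = (\<Sum>x\<in>V. \<Sum>w\<in>V. \<Sum>y\<in>V. cw T v w x y)"
    by (intro sum.cong refl) (auto simp: cw_def)
  also have "\<dots> = FF T V v" unfolding FF_def by (rule P2)
  finally show ?thesis .
qed

lemma r4: "(\<Sum>x\<in>V. \<Sum>w\<in>V. \<Sum>z\<in>V. cw T x v z w) = FF T V v"
  unfolding FF_def by (intro sum.cong refl) (auto simp: cw_def)

lemma cw0:
  assumes irr: "\<And>x. \<not> T x x" and asym: "\<And>x y. T x y \<Longrightarrow> \<not> T y x"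
  shows "cw T x x z w = 0" "cw T x y y w = 0" "cw T x y z z = 0" "cw T x y z x = 0"
    "cw T x y x w = 0" "cw T x y z y = 0"
  using irr asym unfolding cw_def by auto

lemma WW_insert:
  assumes fin: "finite V" and nv: "v \<notin> V"
    and irr: "\<And>x. \<not> T x x" and asym: "\<And>x y. T x y \<Longrightarrow> \<not> T y x"
  shows "WW T (insert v V) = WW T V + 4 * FF T V v"
  using fin nv
  by (simp add: WW_def sum.insert sum.distrib cw0[OF irr asym] r2 r3 r4 FF_def[symmetric])

lemma FF_insert:
  assumes fin: "finite V" and nv: "v \<notin> V"
    and irr: "\<And>x. \<not> T x x" and asym: "\<And>x y. T x y \<Longrightarrow> \<not> T y x"
  shows "FF T (insert v V) v = FF T V v"
  using fin nv
  by (simp add: FF_def sum.insert sum.distrib cw0[OF irr asym])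

definition ee :: "('a \<Rightarrow> 'a \<Rightarrow> bool) \<Rightarrow> 'a \<Rightarrow> 'a \<Rightarrow> real" where
  "ee T x y = (if T x y then 1 else 0)"

definition PP :: "('a \<Rightarrow> 'a \<Rightarrow> bool) \<Rightarrow> 'a set \<Rightarrow> 'a \<Rightarrow> 'a \<Rightarrow> real" where
  "PP T V x z = (\<Sum>y\<in>V. ee T x y * ee T y z)"

lemma FF_PP: "FF T V v = (\<Sum>z\<in>V. PP T V v z * PP T V z v)"
proof -
  have "FF T V v = (\<Sum>z\<in>V. \<Sum>w\<in>V. \<Sum>y\<in>V. cw T v y z w)"
    unfolding FF_def by (rule sum.swap)
  also have "\<dots> = (\<Sum>z\<in>V. \<Sum>w\<in>V. \<Sum>y\<in>V. (ee T v y * ee T y z) * (ee T z w * ee T w v))"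
    by (intro sum.cong refl) (simp add: cw_def ee_def)
  also have "\<dots> = (\<Sum>z\<in>V. PP T V v z * PP T V z v)"
    unfolding PP_def by (simp add: sum_distrib_left sum_distrib_right mult.commute)
  finally show ?thesis .
qed

lemma pick_sum:
  assumes fin: "finite S"
  shows "(\<Sum>x\<in>S. g x) = (\<Sum>i<card S. g (pick S i))"
proof -
  have inj: "inj_on (pick S) {..<card S}"
  proof (rule inj_onI)
    fix i j assume i: "i \<in> {..<card S}" and j: "j \<in> {..<card S}" and e: "pick S i = pick S j"
    show "i = j"
    proof (rule ccontr)
      assume "i \<noteq> j"
      then have "i < j \<or> j < i" by arith
      then show False using pick_mono_le[of j S i] pick_mono_le[of i S j] i j e by auto
    qed
  qed
  have im: "pick S ` {..<card S} = S"
  proof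
    show "pick S ` {..<card S} \<subseteq> S" using pick_in_set_le by auto
    show "S \<subseteq> pick S ` {..<card S}"
    proof
      fix x assume x: "x \<in> S"
      have "{a\<in>S. a < x} \<subset> S" using x by auto
      then have "card {a\<in>S. a < x} < card S" using psubset_card_mono[OF fin] by blast
      moreover have "pick S (card {a\<in>S. a < x}) = x" using x by (rule pick_card_in_set)
      ultimately show "x \<in> pick S ` {..<card S}" by (intro image_eqI[of x _ "card {a\<in>S. a < x}"]) auto
    qed
  qed
  have "(\<Sum>x\<in>S. g x) = sum g (pick S ` {..<card S})" by (simp only: im)
  also have "\<dots> = sum (g \<circ> pick S) {..<card S}" by (rule sum.reindex[OF inj])
  finally show ?thesis by simp
qed

lemma ee4: "ee T a b * ee T b c * ee T c d * ee T d a = cw T a b c d"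
  by (simp add: ee_def cw_def)

lemma tr4_sub:
  assumes S: "S \<subseteq> {0..<n}"
  shows "tr4 (submatrix (adj_matrix n T) S S) = WW T S"
proof -
  have fin: "finite S" using S finite_subset by blast
  have cS: "{i. i < dim_row (adj_matrix n T) \<and> i \<in> S} = S" using S by (auto simp: adj_matrix_def)
  let ?M = "submatrix (adj_matrix n T) S S"
  have dM: "dim_row ?M = card S" using cS by (simp add: dim_submatrix)
  have ent: "?M $$ (i,j) = ee T (pick S i) (pick S j)" if "i < card S" "j < card S" for i j
  proof -
    have "?M $$ (i,j) = adj_matrix n T $$ (pick S i, pick S j)"
      using that cS by (simp add: submatrix_index adj_matrix_def)
    moreover have "pick S i < n" "pick S j < n" using pick_in_set_le[OF that(1)] pick_in_set_le[OF that(2)] S by auto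
    ultimately show ?thesis by (simp add: adj_matrix_def ee_def)
  qed
  have "tr4 ?M = (\<Sum>i<card S. \<Sum>l<card S. \<Sum>k<card S. \<Sum>j<card S.
     cw T (pick S i) (pick S j) (pick S k) (pick S l))"
    unfolding tr4_def dM by (simp add: ent ee4)
  also have "\<dots> = WW T S"
    unfolding WW_def by (simp only: pick_sum[OF fin])
  finally show ?thesis .
qed



definition t7 :: "nat \<Rightarrow> nat \<Rightarrow> bool" where
  "t7 a c \<longleftrightarrow> a*7+c \<in> {2,5,6,7,12,13,15,18,20,21,22,23,28,29,31,37,38,39,45,46,47}"

lemma lt7: "(a::nat) < 7 \<longleftrightarrow> a = 0 \<or> a = 1 \<or> a = 2 \<or> a = 3 \<or> a = 4 \<or> a = 5 \<or> a = 6" by auto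

lemma t7_anti: "a < 7 \<Longrightarrow> c < 7 \<Longrightarrow> a \<noteq> c \<Longrightarrow> t7 a c \<longleftrightarrow> \<not> t7 c a"
  unfolding lt7 by (elim disjE; simp add: t7_def)

lemma t7_irr: "a < 7 \<Longrightarrow> \<not> t7 a a"
  unfolding lt7 by (elim disjE; simp add: t7_def)

definition e7 :: "nat \<Rightarrow> nat \<Rightarrow> real" where "e7 a c = (if t7 a c then 1 else 0)"

lemma sum7: "(\<Sum>c<(7::nat). f c) = f 0 + f 1 + f 2 + f 3 + f 4 + f 5 + (f 6 :: 'b::comm_monoid_add)"
  by (simp add: numeral_eq_Suc add.assoc)

lemma t7_out: "a < 7 \<Longrightarrow> (\<Sum>c<7. e7 a c) = 3"
  unfolding lt7 sum7 by (elim disjE; simp add: e7_def t7_def)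

lemma t7_in: "a < 7 \<Longrightarrow> (\<Sum>c<7. e7 c a) = 3"
  unfolding lt7 sum7 by (elim disjE; simp add: e7_def t7_def)

lemma t7_out_nat: "a < 7 \<Longrightarrow> (\<Sum>c<7. if t7 a c then 1 else 0) = (3::nat)"
  unfolding lt7 sum7 by (elim disjE; simp add: t7_def)

definition K7 :: "nat \<Rightarrow> real" where
  "K7 a = (\<Sum>c<7. (\<Sum>c'<7. e7 a c' * e7 c' c) * (\<Sum>c'<7. e7 c c' * e7 c' a))"

lemma K7_0: "K7 0 = 14" by (simp add: K7_def sum7 e7_def t7_def)
lemma K7_2: "K7 2 = 12" by (simp add: K7_def sum7 e7_def t7_def)

definition rc :: "nat \<Rightarrow> nat \<Rightarrow> nat \<Rightarrow> bool" where
  "rc m b d \<longleftrightarrow> 1 \<le> (d + m - b) mod m \<and> 2 * ((d + m - b) mod m) < m"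

lemma rc_vals:
  fixes b d m :: nat
  assumes "b < d" "d < m"
  shows "(d + m - b) mod m = d - b" "(b + m - d) mod m = m - (d - b)"
proof -
  have eq: "d + m - b = (d - b) + m" using assms by arith
  have "(d + m - b) mod m = ((d - b) + m) mod m" by (simp only: eq)
  also have "\<dots> = (d - b) mod m" by simp
  also have "\<dots> = d - b" using assms by simp
  finally show "(d + m - b) mod m = d - b" .
  have "b + m - d < m" "b + m - d = m - (d - b)" using assms by auto
  then show "(b + m - d) mod m = m - (d - b)" by simp
qed

lemma iff_aux:
  fixes s t h :: nat
  assumes "s + t = 2*h+1" "1 \<le> t" "1 \<le> s"
  shows "(1 \<le> t \<and> 2 * t < 2*h+1) \<longleftrightarrow> \<not> (1 \<le> s \<and> 2 * s < 2*h+1)"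
  using assms by presburger

lemma rc_anti:
  assumes m: "odd m" and b: "b < m" and d: "d < m" and bd: "b \<noteq> d"
  shows "rc m b d \<longleftrightarrow> \<not> rc m d b"
proof -
  obtain h where h: "m = 2*h+1" using m oddE by blast
  show ?thesis
  proof (cases "b < d")
    case True
    have e: "(m - (d - b)) + (d - b) = 2*h+1" "1 \<le> d - b" "1 \<le> m - (d - b)" using True d h by auto
    show ?thesis unfolding rc_def rc_vals[OF True d] using iff_aux[OF e] h by simp
  next
    case False
    then have db: "d < b" using bd by simp
    have e: "(m - (b - d)) + (b - d) = 2*h+1" "1 \<le> b - d" "1 \<le> m - (b - d)" using db b h by auto
    show ?thesis unfolding rc_def rc_vals[OF db b] using iff_aux[OF e] h by auto
  qed
qed

lemma rc_irr: "\<not> rc m b b"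
  by (simp add: rc_def)

definition TT :: "nat \<Rightarrow> nat \<Rightarrow> nat \<Rightarrow> bool" where
  "TT m x y \<longleftrightarrow> x < m*7 \<and> y < m*7 \<and>
     (if x div 7 = y div 7 then t7 (x mod 7) (y mod 7) else rc m (x div 7) (y div 7))"

lemma TT_irr: "\<not> TT m x x"
  unfolding TT_def using t7_irr by simp

lemma TT_anti:
  assumes m: "odd m" and x: "x < m*7" and y: "y < m*7" and xy: "x \<noteq> y"
  shows "TT m x y \<longleftrightarrow> \<not> TT m y x"
proof (cases "x div 7 = y div 7")
  case True
  then have "x mod 7 \<noteq> y mod 7" using xy by (metis div_mod_decomp)
  then show ?thesis unfolding TT_def using True x y t7_anti[of "x mod 7" "y mod 7"] by simp
next
  case False
  have "x div 7 < m" "y div 7 < m" using x y by (simp_all add: less_mult_imp_div_less)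
  then show ?thesis unfolding TT_def using False x y rc_anti[OF m, of "x div 7" "y div 7"] by auto
qed

lemma TT_asym: "odd m \<Longrightarrow> TT m x y \<Longrightarrow> \<not> TT m y x"
  using TT_anti[of m x y] TT_irr[of m x] by (cases "x = y") (auto simp: TT_def)

lemma TT_block:
  assumes "a < 7" "c < 7" "b < m" "d < m"
  shows "TT m (b*7+a) (d*7+c) = (if b = d then t7 a c else rc m b d)"
proof -
  have "b*7+a < m*7" "d*7+c < m*7" using assms by linarith+
  moreover have "(b*7+a) div 7 = b" "(d*7+c) div 7 = d" "(b*7+a) mod 7 = a" "(d*7+c) mod 7 = c"
    using assms by simp_all
  ultimately show ?thesis unfolding TT_def by simp
qed

lemma grp:
  fixes g :: "nat \<Rightarrow> 'b::comm_monoid_add" and m :: nat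
  shows "(\<Sum>z<m*7. g z) = (\<Sum>d<m. \<Sum>c<7. g (d*7+c))"
proof -
  have "(\<Sum>z<m*7. g z) = (\<Sum>d<m. sum g {d*7..<d*7+7})" by (rule sum.nat_group[symmetric])
  also have "\<dots> = (\<Sum>d<m. \<Sum>c<7. g (d*7+c))"
  proof (rule sum.cong[OF refl])
    fix d
    have "sum g {d*7..<d*7+7} = sum g {0+d*7..<7+d*7}" by (simp add: add.commute)
    also have "\<dots> = (\<Sum>c = 0..<7. g (c + d*7))" by (rule sum.shift_bounds_nat_ivl)
    finally show "sum g {d*7..<d*7+7} = (\<Sum>c<7. g (d*7+c))" by (simp add: atLeast0LessThan add.commute)
  qed
  finally show ?thesis .
qed



lemma card_sum: fixes N :: nat shows "card {j. j < N \<and> P j} = (\<Sum>j<N. if P j then 1 else (0::nat))"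
proof -
  have "{j. j < N \<and> P j} = {j\<in>{..<N}. P j}" by auto
  then have "card {j. j < N \<and> P j} = (\<Sum>j\<in>{j\<in>{..<N}. P j}. 1)" by simp
  also have "\<dots> = (\<Sum>j<N. if P j then 1 else 0)" by (rule sum.inter_filter) simp
  finally show ?thesis .
qed

definition Qm :: "nat \<Rightarrow> nat" where "Qm m = (\<Sum>t<m. if 1 \<le> t \<and> 2*t < m then 1 else 0)"

lemma rc_sum:
  assumes b: "b < m"
  shows "(\<Sum>d<m. if rc m b d then 1 else (0::nat)) = Qm m"
  unfolding Qm_def
proof (rule sum.reindex_bij_witness[where i = "\<lambda>t. (t + b) mod m" and j = "\<lambda>d. (d + m - b) mod m"])
  have m: "0 < m" using b by simp
  fix d assume d: "d \<in> {..<m}"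
  have "((d + m - b) mod m + b) mod m = ((d + m - b) + b) mod m" by (rule mod_add_left_eq)
  also have "(d + m - b) + b = d + m" using b by simp
  also have "(d + m) mod m = d" using d by simp
  finally show "((d + m - b) mod m + b) mod m = d" .
  show "(d + m - b) mod m \<in> {..<m}" using m by simp
  show "(if 1 \<le> (d + m - b) mod m \<and> 2 * ((d + m - b) mod m) < m then 1 else 0) = (if rc m b d then 1 else (0::nat))"
    by (simp add: rc_def)
next
  have m: "0 < m" using b by simp
  fix t assume t: "t \<in> {..<m}"
  have "(t + b) mod m + m - b = (t + b) mod m + (m - b)" using b by simp
  then have "((t + b) mod m + m - b) mod m = ((t + b) mod m + (m - b)) mod m" by simp
  also have "\<dots> = ((t + b) + (m - b)) mod m" by (rule mod_add_left_eq)
  also have "(t + b) + (m - b) = t + m" using b by simp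
  also have "(t + m) mod m = t" using t by simp
  finally show "((t + b) mod m + m - b) mod m = t" .
  show "(t + b) mod m \<in> {..<m}" using m by simp
qed

lemma xdecomp: "x = (x div 7) * 7 + x mod (7::nat)" by simp

lemma deg:
  assumes m: "odd m" and x: "x < m*7"
  shows "out_degree (m*7) (TT m) x = 3 + 7 * Qm m"
proof -
  define b where "b = x div 7"
  define a where "a = x mod 7"
  have xb: "x = b*7+a" unfolding a_def b_def by simp
  have a: "a < 7" unfolding a_def by simp
  have b: "b < m" unfolding b_def using x by (simp add: less_mult_imp_div_less)
  have "out_degree (m*7) (TT m) x = (\<Sum>j<m*7. if TT m x j then 1 else (0::nat))"
    unfolding out_degree_def by (rule card_sum)
  also have "\<dots> = (\<Sum>d<m. \<Sum>c<7. if TT m (b*7+a) (d*7+c) then 1 else (0::nat))"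
    unfolding xb by (rule grp)
  also have "\<dots> = (\<Sum>d<m. 7 * (if rc m b d then 1 else 0) + (if d = b then 3 else 0))"
  proof (rule sum.cong[OF refl])
    fix d assume d: "d \<in> {..<m}"
    show "(\<Sum>c<7. if TT m (b*7+a) (d*7+c) then 1 else (0::nat)) =
        7 * (if rc m b d then 1 else 0) + (if d = b then 3 else 0)"
    proof (cases "d = b")
      case True
      have "(\<Sum>c<7. if TT m (b*7+a) (d*7+c) then 1 else (0::nat)) = (\<Sum>c<7. if t7 a c then 1 else 0)"
        using True a b by (intro sum.cong refl) (simp add: TT_block)
      then show ?thesis using True t7_out_nat[OF a] by (simp add: rc_irr)
    next
      case False
      have "(\<Sum>c<7. if TT m (b*7+a) (d*7+c) then 1 else (0::nat)) = (\<Sum>c<(7::nat). if rc m b d then 1 else 0)"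
        using False a b d by (intro sum.cong refl) (auto simp: TT_block)
      then show ?thesis using False by simp
    qed
  qed
  also have "\<dots> = 7 * (\<Sum>d<m. if rc m b d then 1 else 0) + 3"
    using b by (simp add: sum.distrib sum_distrib_left)
  also have "\<dots> = 3 + 7 * Qm m" using rc_sum[OF b] by simp
  finally show ?thesis .
qed

lemma regular: "odd m \<Longrightarrow> regular_tournament (m*7) (TT m)"
  unfolding regular_tournament_def tournament_def
  using TT_irr TT_anti deg by blast



definition rr :: "nat \<Rightarrow> nat \<Rightarrow> nat \<Rightarrow> real" where "rr m b d = (if rc m b d then 1 else 0)"

lemma ee_block:
  assumes "a < 7" "c < 7" "b < m" "d < m"
  shows "ee (TT m) (b*7+a) (d*7+c) = (if b = d then e7 a c else rr m b d)"
  using assms by (simp add: ee_def TT_block e7_def rr_def)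

lemma PP_grp: "PP (TT m) {..<m*7} x z = (\<Sum>d'<m. \<Sum>c'<7. ee (TT m) x (d'*7+c') * ee (TT m) (d'*7+c') z)"
  unfolding PP_def by (rule grp)

lemma PA:
  assumes m: "odd m" and b: "b < m" and a: "a < 7" and c: "c < 7"
  shows "PP (TT m) {..<m*7} (b*7+a) (b*7+c) = (\<Sum>c'<7. e7 a c' * e7 c' c)"
proof -
  have "PP (TT m) {..<m*7} (b*7+a) (b*7+c) = (\<Sum>d'<m. if d' = b then (\<Sum>c'<7. e7 a c' * e7 c' c) else 0)"
    unfolding PP_grp
  proof (rule sum.cong[OF refl])
    fix d' assume d': "d' \<in> {..<m}"
    show "(\<Sum>c'<7. ee (TT m) (b*7+a) (d'*7+c') * ee (TT m) (d'*7+c') (b*7+c)) =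
      (if d' = b then (\<Sum>c'<7. e7 a c' * e7 c' c) else 0)"
    proof (cases "d' = b")
      case True
      then show ?thesis using a b c by (simp add: ee_block)
    next
      case False
      have "rr m b d' * rr m d' b = 0" using rc_anti[OF m b, of d'] d' False by (auto simp: rr_def)
      then show ?thesis using False a b c d' by (simp add: ee_block)
    qed
  qed
  also have "\<dots> = (\<Sum>c'<7. e7 a c' * e7 c' c)" using b by simp
  finally show ?thesis .
qed

definition PB1 :: "nat \<Rightarrow> nat \<Rightarrow> nat \<Rightarrow> nat \<Rightarrow> real" where
  "PB1 m b d c = (\<Sum>d'<m. if d' = b then 3 * rr m b d else (\<Sum>c'<7. rr m b d' * ee (TT m) (d'*7+c') (d*7+c)))"

definition PB2 :: "nat \<Rightarrow> nat \<Rightarrow> nat \<Rightarrow> nat \<Rightarrow> real" where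
  "PB2 m b d c = (\<Sum>d'<m. if d' = b then rr m d b * 3 else (\<Sum>c'<7. ee (TT m) (d*7+c) (d'*7+c') * rr m d' b))"

lemma PB1:
  assumes b: "b < m" and d: "d < m" and bd: "b \<noteq> d" and a: "a < 7" and c: "c < 7"
  shows "PP (TT m) {..<m*7} (b*7+a) (d*7+c) = PB1 m b d c"
  unfolding PP_grp PB1_def
proof (rule sum.cong[OF refl])
  fix d' assume d': "d' \<in> {..<m}"
  show "(\<Sum>c'<7. ee (TT m) (b*7+a) (d'*7+c') * ee (TT m) (d'*7+c') (d*7+c)) =
    (if d' = b then 3 * rr m b d else (\<Sum>c'<7. rr m b d' * ee (TT m) (d'*7+c') (d*7+c)))"
  proof (cases "d' = b")
    case True
    have "(\<Sum>c'<7. ee (TT m) (b*7+a) (d'*7+c') * ee (TT m) (d'*7+c') (d*7+c)) = (\<Sum>c'<7. e7 a c' * rr m b d)"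
      using True a b c d bd by (intro sum.cong refl) (simp add: ee_block)
    also have "\<dots> = (\<Sum>c'<7. e7 a c') * rr m b d" by (rule sum_distrib_right[symmetric])
    finally show ?thesis using True t7_out[OF a] by simp
  next
    case False
    have "(\<Sum>c'<7. ee (TT m) (b*7+a) (d'*7+c') * ee (TT m) (d'*7+c') (d*7+c)) =
       (\<Sum>c'<7. rr m b d' * ee (TT m) (d'*7+c') (d*7+c))"
      using False a b d' by (intro sum.cong refl) (simp add: ee_block)
    then show ?thesis using False by simp
  qed
qed

lemma PB2:
  assumes b: "b < m" and d: "d < m" and bd: "b \<noteq> d" and a: "a < 7" and c: "c < 7"
  shows "PP (TT m) {..<m*7} (d*7+c) (b*7+a) = PB2 m b d c"
  unfolding PP_grp PB2_def
proof (rule sum.cong[OF refl])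
  fix d' assume d': "d' \<in> {..<m}"
  show "(\<Sum>c'<7. ee (TT m) (d*7+c) (d'*7+c') * ee (TT m) (d'*7+c') (b*7+a)) =
    (if d' = b then rr m d b * 3 else (\<Sum>c'<7. ee (TT m) (d*7+c) (d'*7+c') * rr m d' b))"
  proof (cases "d' = b")
    case True
    have "(\<Sum>c'<7. ee (TT m) (d*7+c) (d'*7+c') * ee (TT m) (d'*7+c') (b*7+a)) = (\<Sum>c'<7. rr m d b * e7 c' a)"
      using True a b c d bd by (intro sum.cong refl) (auto simp: ee_block)
    also have "\<dots> = rr m d b * (\<Sum>c'<7. e7 c' a)" by (rule sum_distrib_left[symmetric])
    finally show ?thesis using True t7_in[OF a] by simp
  next
    case False
    have "(\<Sum>c'<7. ee (TT m) (d*7+c) (d'*7+c') * ee (TT m) (d'*7+c') (b*7+a)) =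
       (\<Sum>c'<7. ee (TT m) (d*7+c) (d'*7+c') * rr m d' b)"
      using False a b d' by (intro sum.cong refl) (simp add: ee_block)
    then show ?thesis using False by simp
  qed
qed

definition HH :: "nat \<Rightarrow> nat \<Rightarrow> nat \<Rightarrow> real" where
  "HH m v d = (\<Sum>c<7. PP (TT m) {..<m*7} v (d*7+c) * PP (TT m) {..<m*7} (d*7+c) v)"

lemma FF_HH: "FF (TT m) {..<m*7} v = (\<Sum>d<m. HH m v d)"
  unfolding FF_PP HH_def by (rule grp)

lemma HH_same:
  assumes m: "odd m" and b: "b < m" and a: "a < 7"
  shows "HH m (b*7+a) b = K7 a"
  unfolding HH_def K7_def using PA[OF m b a] PA[OF m b _ a] by simp

lemma HH_other:
  assumes b: "b < m" and d: "d < m" and bd: "b \<noteq> d" and a: "a < 7" and a': "a' < 7"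
  shows "HH m (b*7+a) d = HH m (b*7+a') d"
  unfolding HH_def using PB1[OF b d bd a] PB2[OF b d bd a] PB1[OF b d bd a'] PB2[OF b d bd a'] by simp

lemma FF_diff:
  assumes m: "odd m"
  shows "FF (TT m) {..<m*7} 0 - FF (TT m) {..<m*7} 2 = 2"
proof -
  have m0: "0 < m" using m by (cases m) auto
  have h0: "(0::nat)*7+0 = 0" and h2: "(0::nat)*7+2 = 2" by simp_all
  note S0 = HH_same[OF m m0, of 0, unfolded h0]
  note S2 = HH_same[OF m m0, of 2, unfolded h2]
  note O = HH_other[OF m0 _ _, of _ 0 2, unfolded h0 h2]
  have "FF (TT m) {..<m*7} 0 - FF (TT m) {..<m*7} 2 = (\<Sum>d<m. HH m 0 d - HH m 2 d)"
    unfolding FF_HH by (rule sum_subtractf[symmetric])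
  also have "\<dots> = (\<Sum>d<m. if d = 0 then 2 else 0)"
  proof (rule sum.cong[OF refl])
    fix d assume d: "d \<in> {..<m}"
    show "HH m 0 d - HH m 2 d = (if d = 0 then 2 else 0)"
    proof (cases "d = 0")
      case True
      then show ?thesis using S0 S2 K7_0 K7_2 by simp
    next
      case False
      then show ?thesis using O[of d] d by simp
    qed
  qed
  also have "\<dots> = 2" using m0 by simp
  finally show ?thesis .
qed


theorem theorem1p2:
  fixes k n :: nat
  assumes "n = 3 ^ k * 7"
  shows "\<exists>T. regular_tournament n T \<and> \<not> spectrally_monomorphic (n - 1) n T"
proof -
  define m where "m = (3::nat) ^ k"
  have m: "odd m" by (simp add: m_def)
  have n: "n = m*7" using assms m_def by simp
  have m0: "0 < m" using m by (cases m) auto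
  have n7: "7 \<le> n" using n m0 by simp
  show ?thesis
  proof (intro exI conjI)
    show "regular_tournament n (TT m)" unfolding n by (rule regular[OF m])
    show "\<not> spectrally_monomorphic (n - 1) n (TT m)"
    proof
      assume sm: "spectrally_monomorphic (n - 1) n (TT m)"
      define S1 where "S1 = {0..<n} - {0}"
      define S2 where "S2 = {0..<n} - {2}"
      have sub: "S1 \<subseteq> {0..<n}" "S2 \<subseteq> {0..<n}" unfolding S1_def S2_def by auto
      have cardS: "card S1 = n - 1" "card S2 = n - 1" unfolding S1_def S2_def using n7 by simp_all
      have cp: "char_poly (submatrix (adj_matrix n (TT m)) S1 S1) = char_poly (submatrix (adj_matrix n (TT m)) S2 S2)"
        using sm[unfolded spectrally_monomorphic_def, rule_format, OF sub(1) cardS(1) sub(2) cardS(2)] .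
      have car: "submatrix (adj_matrix n (TT m)) S S \<in> carrier_mat (n - 1) (n - 1)"
        if "S \<subseteq> {0..<n}" "card S = n - 1" for S
      proof -
        have "{i. i < dim_row (adj_matrix n (TT m)) \<and> i \<in> S} = S"
          "{i. i < dim_col (adj_matrix n (TT m)) \<and> i \<in> S} = S"
          using that by (auto simp: adj_matrix_def)
        then have "dim_row (submatrix (adj_matrix n (TT m)) S S) = n - 1"
          "dim_col (submatrix (adj_matrix n (TT m)) S S) = n - 1"
          by (simp_all only: dim_submatrix that(2))
        then show ?thesis by (rule carrier_matI)
      qed
      have "tr4 (submatrix (adj_matrix n (TT m)) S1 S1) = tr4 (submatrix (adj_matrix n (TT m)) S2 S2)"
        by (rule tr4_char_poly[OF car[OF sub(1) cardS(1)] car[OF sub(2) cardS(2)] cp])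
      then have WWe: "WW (TT m) S1 = WW (TT m) S2" using tr4_sub[OF sub(1), of "TT m"] tr4_sub[OF sub(2), of "TT m"] by argo
      have fin: "finite S1" "finite S2" unfolding S1_def S2_def by auto
      have ins: "insert 0 S1 = {..<m*7}" "insert 2 S2 = {..<m*7}"
        unfolding S1_def S2_def using n n7 by auto
      have nin: "0 \<notin> S1" "2 \<notin> S2" unfolding S1_def S2_def by auto
      have w1: "WW (TT m) {..<m*7} = WW (TT m) S1 + 4 * FF (TT m) S1 0"
        using WW_insert[where T="TT m", OF fin(1) nin(1) TT_irr TT_asym[OF m]] unfolding ins(1) by (simp only:)
      have w2: "WW (TT m) {..<m*7} = WW (TT m) S2 + 4 * FF (TT m) S2 2"
        using WW_insert[where T="TT m", OF fin(2) nin(2) TT_irr TT_asym[OF m]] unfolding ins(2) by (simp only:)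
      have f1: "FF (TT m) {..<m*7} 0 = FF (TT m) S1 0"
        using FF_insert[where T="TT m", OF fin(1) nin(1) TT_irr TT_asym[OF m]] unfolding ins(1) by (simp only:)
      have f2: "FF (TT m) {..<m*7} 2 = FF (TT m) S2 2"
        using FF_insert[where T="TT m", OF fin(2) nin(2) TT_irr TT_asym[OF m]] unfolding ins(2) by (simp only:)
      have "FF (TT m) {..<m*7} 0 = FF (TT m) {..<m*7} 2" using w1 w2 f1 f2 WWe by simp
      then show False using FF_diff[OF m] by simp
    qed
  qed
qed

end
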